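(* Let $N\ge3$, $h=1/N$, $\tau>0$, $\eta>0$, $\sigma\in\mathbb{R}$, $k\in\{2,3,4\}$, and let $\mathbf{X}^{m-p}=(x^{m-p},y^{m-p})^T\in\mathbb{X}^h$, $p=0,\dots,k-1$, be given. Let $\widetilde{\mathbf{X}}^{m+1}\in\mathbb{X}^h$ be the predicted curve (generated by the BDF$(k-1)$-ZJB scheme), with edges $\widetilde{\mathbf{h}}^{m+1}_j=\widetilde{\mathbf{X}}^{m+1}(\rho_j)-\widetilde{\mathbf{X}}^{m+1}(\rho_{j-1})$ and unit normals $\widetilde{\mathbf{n}}^{m+1}_j=(\widetilde n^{m+1}_{j,1},\widetilde n^{m+1}_{j,2})^T$ on $I_j$, $j=1,\dots,N$. Assume (i) $(\widetilde n^{m+1}_{1,1})^2+(\widetilde n^{m+1}_{N,1})^2>0$, and (ii) $\min_{1\le j\le N}|\widetilde{\mathbf{h}}^{m+1}_j|>0$. Then the linear system (BDF$k$-ZJB scheme): find $\mathbf{X}^{m+1}=(x^{m+1},y^{m+1})^T\in\mathbb{X}^h$ and $\kappa^{m+1}\in\mathbb{K}^h$ such that $$\Big\langle\tfrac{a\mathbf{X}^{m+1}-\widehat{\mathbf{X}}^m}{\tau},\widetilde{\mathbf{n}}^{m+1}\psi^h\Big\rangle^h_{\widetilde\Gamma^{m+1}}+\langle\partial_s\kappa^{m+1},\partial_s\psi^h\rangle_{\widetilde\Gamma^{m+1}}=0\quad\forall\psi^h\in\mathbb{K}^h,$$ $$\langle\kappa^{m+1}\widetilde{\mathbf{n}}^{m+1},\boldsymbol\omega^h\rangle^h_{\widetilde\Gamma^{m+1}}-\langle\partial_s\mathbf{X}^{m+1},\partial_s\boldsymbol\omega^h\rangle_{\widetilde\Gamma^{m+1}}+\sigma[\omega^h_1(1)-\omega^h_1(0)]$$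 $$-\frac1{\eta\tau}\Big[\big(a\,x^{m+1}(0)-\widehat x^m(0)\big)\omega^h_1(0)+\big(a\,x^{m+1}(1)-\widehat x^m(1)\big)\omega^h_1(1)\Big]=0\quad\forall\boldsymbol\omega^h=(\omega^h_1,\omega^h_2)^T\in\mathbb{X}^h,$$ is well-posed, i.e., it has a unique solution $(\mathbf{X}^{m+1},\kappa^{m+1})\in\mathbb{X}^h\times\mathbb{K}^h$.
   Context: Mesh: $\rho_j=jh$, $I_j=[\rho_{j-1},\rho_j]$. $\mathbb{K}^h$ = continuous functions on $[0,1]$ affine on each $I_j$; $\mathbb{K}^h_0=\{\psi\in\mathbb{K}^h:\psi(0)=\psi(1)=0\}$; $\mathbb{X}^h=\mathbb{K}^h\times\mathbb{K}^h_0$. For $\mathbf{Y}\in\mathbb{X}^h$ with edges $\mathbf{h}_j=\mathbf{Y}(\rho_j)-\mathbf{Y}(\rho_{j-1})\ne0$: normal on $I_j$ is $\big(-(\mathbf{h}_j)_2,(\mathbf{h}_j)_1\big)^T/|\mathbf{h}_j|$; $\partial_sf|_{I_j}=h\partial_\rho f|_{I_j}/|\mathbf{h}_j|$; $\langle u,v\rangle_{\mathbf{Y}}=\int_0^1u\cdot v|\partial_\rho\mathbf{Y}|d\rho$; $\langle u,v\rangle^h_{\mathbf{Y}}=\frac12\sum_{j=1}^N|\mathbf{h}_j|[(u\cdot v)(\rho_j^-)+(u\cdot v)(\rho_{j-1}^+)]$. $\widetilde\Gamma^{m+1}$ denotes the curve $\widetilde{\mathbf{X}}^{m+1}$, with respect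 to which normals, $\partial_s$ and inner products are taken. Coefficients: BDF2: $a=\frac32$, $\widehat{\mathbf{X}}^m=2\mathbf{X}^m-\frac12\mathbf{X}^{m-1}$; BDF3: $a=\frac{11}6$, $\widehat{\mathbf{X}}^m=3\mathbf{X}^m-\frac32\mathbf{X}^{m-1}+\frac13\mathbf{X}^{m-2}$; BDF4: $a=\frac{25}{12}$, $\widehat{\mathbf{X}}^m=4\mathbf{X}^m-3\mathbf{X}^{m-1}+\frac43\mathbf{X}^{m-2}-\frac14\mathbf{X}^{m-3}$; $\widehat x^m$ is the first component of $\widehat{\mathbf{X}}^m$. The BDF1-ZJB scheme is the ZJB (backward Euler) scheme, in which normals, $\partial_s$ and inner products are taken on the previous curve $\mathbf{X}^m$ and $a=1$, $\widehat{\mathbf{X}}^m=\mathbf{X}^m$; the BDF$j$-ZJB scheme uses as predicted curve the output of the BDF$(j-1)$-ZJB scheme. *)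

theory Defs
  imports Complex_Main
begin

text \<open>Piecewise-linear finite element functions on the uniform mesh
 rho_j = j h, h = 1/N, are represented by their nodal values at j = 0..N
 (a function in K^h is uniquely determined by these; values at j > N are
 normalised to 0).\<close>

definition mesh_h :: "nat \<Rightarrow> real" where
  "mesh_h N = 1 / real N"

definition Kh :: "nat \<Rightarrow> (nat \<Rightarrow> real) set" where
  "Kh N = {f. \<forall>j>N. f j = 0}"

definition Kh0 :: "nat \<Rightarrow> (nat \<Rightarrow> real) set" where
  "Kh0 N = {f \<in> Kh N. f 0 = 0 \<and> f N = 0}"

definition Xh :: "nat \<Rightarrow> (nat \<Rightarrow> real \<times> real) set" where
  "Xh N = {X. (\<lambda>j. fst (X j)) \<in> Kh N \<and> (\<lambda>j. snd (X j)) \<in> Kh0 N}"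

definition edge1 :: "(nat \<Rightarrow> real \<times> real) \<Rightarrow> nat \<Rightarrow> real" where
  "edge1 Y j = fst (Y j) - fst (Y (j - 1))"
definition edge2 :: "(nat \<Rightarrow> real \<times> real) \<Rightarrow> nat \<Rightarrow> real" where
  "edge2 Y j = snd (Y j) - snd (Y (j - 1))"
definition elen :: "(nat \<Rightarrow> real \<times> real) \<Rightarrow> nat \<Rightarrow> real" where
  "elen Y j = sqrt ((edge1 Y j)\<^sup>2 + (edge2 Y j)\<^sup>2)"
definition nrm1 :: "(nat \<Rightarrow> real \<times> real) \<Rightarrow> nat \<Rightarrow> real" where
  "nrm1 Y j = - edge2 Y j / elen Y j"
definition nrm2 :: "(nat \<Rightarrow> real \<times> real) \<Rightarrow> nat \<Rightarrow> real" where
  "nrm2 Y j = edge1 Y j / elen Y j"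

definition drho :: "nat \<Rightarrow> (nat \<Rightarrow> real) \<Rightarrow> nat \<Rightarrow> real" where
  "drho N f j = (f j - f (j - 1)) / mesh_h N"
definition ds :: "nat \<Rightarrow> (nat \<Rightarrow> real \<times> real) \<Rightarrow> (nat \<Rightarrow> real) \<Rightarrow> nat \<Rightarrow> real" where
  "ds N Y f j = mesh_h N * drho N f j / elen Y j"

text \<open>L2 inner product <u,v>_Y = int_0^1 u v |partial_rho Y| drho for functions
 u, v that are constant on each I_j (given by their values u j, v j on I_j);
 on I_j, |partial_rho Y| = |h_j|/h, so the integral over I_j is h * u_j v_j * |h_j|/h.\<close>
definition ip_pc :: "nat \<Rightarrow> (nat \<Rightarrow> real \<times> real) \<Rightarrow> (nat \<Rightarrow> real) \<Rightarrow> (nat \<Rightarrow> real) \<Rightarrow> real" where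
  "ip_pc N Y u v = (\<Sum>j=1..N. mesh_h N * (u j * v j) * sqrt ((drho N (\<lambda>i. fst (Y i)) j)\<^sup>2 + (drho N (\<lambda>i. snd (Y i)) j)\<^sup>2))"

text \<open>Mass-lumped inner product: w j i is the value of (u . v) at node rho_i
 computed from the restriction to I_j (i.e. w j j = (u.v)(rho_j^-),
 w j (j-1) = (u.v)(rho_(j-1)^+)).\<close>
definition ip_lump :: "nat \<Rightarrow> (nat \<Rightarrow> real \<times> real) \<Rightarrow> (nat \<Rightarrow> nat \<Rightarrow> real) \<Rightarrow> real" where
  "ip_lump N Y w = (1/2) * (\<Sum>j=1..N. elen Y j * (w j j + w j (j - 1)))"

text \<open>BDF coefficients: a and the extrapolated curve hat X^m built from
 Xs p = X^(m-p).\<close>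
definition bdf_a :: "nat \<Rightarrow> real" where
  "bdf_a k = (if k = 2 then 3/2 else if k = 3 then 11/6 else 25/12)"

definition bdf_hat :: "nat \<Rightarrow> (nat \<Rightarrow> nat \<Rightarrow> real \<times> real) \<Rightarrow> nat \<Rightarrow> real \<times> real" where
  "bdf_hat k Xs j =
    (if k = 2 then (2 * fst (Xs 0 j) - 1/2 * fst (Xs 1 j),
                    2 * snd (Xs 0 j) - 1/2 * snd (Xs 1 j))
     else if k = 3 then (3 * fst (Xs 0 j) - 3/2 * fst (Xs 1 j) + 1/3 * fst (Xs 2 j),
                         3 * snd (Xs 0 j) - 3/2 * snd (Xs 1 j) + 1/3 * snd (Xs 2 j))
     else (4 * fst (Xs 0 j) - 3 * fst (Xs 1 j) + 4/3 * fst (Xs 2 j) - 1/4 * fst (Xs 3 j),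
           4 * snd (Xs 0 j) - 3 * snd (Xs 1 j) + 4/3 * snd (Xs 2 j) - 1/4 * snd (Xs 3 j)))"

definition bdf_zjb_eqs ::
  "nat \<Rightarrow> nat \<Rightarrow> real \<Rightarrow> real \<Rightarrow> real \<Rightarrow> (nat \<Rightarrow> nat \<Rightarrow> real \<times> real) \<Rightarrow>
   (nat \<Rightarrow> real \<times> real) \<Rightarrow> (nat \<Rightarrow> real \<times> real) \<Rightarrow> (nat \<Rightarrow> real) \<Rightarrow> bool" where
  "bdf_zjb_eqs N k tau eta sigma Xs Xt X kappa \<longleftrightarrow>
    (let a = bdf_a k; Xhat = bdf_hat k Xs;
         V1 = (\<lambda>i. (a * fst (X i) - fst (Xhat i)) / tau);
         V2 = (\<lambda>i. (a * snd (X i) - snd (Xhat i)) / tau)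
     in
     (\<forall>psi \<in> Kh N.
        ip_lump N Xt (\<lambda>j i. (V1 i * nrm1 Xt j + V2 i * nrm2 Xt j) * psi i)
        + ip_pc N Xt (ds N Xt kappa) (ds N Xt psi) = 0)
   \<and> (\<forall>om \<in> Xh N.
        ip_lump N Xt (\<lambda>j i. kappa i * (nrm1 Xt j * fst (om i) + nrm2 Xt j * snd (om i)))
        - (ip_pc N Xt (ds N Xt (\<lambda>i. fst (X i))) (ds N Xt (\<lambda>i. fst (om i)))
           + ip_pc N Xt (ds N Xt (\<lambda>i. snd (X i))) (ds N Xt (\<lambda>i. snd (om i))))
        + sigma * (fst (om N) - fst (om 0))
        - 1 / (eta * tau) * ((a * fst (X 0) - fst (Xhat 0)) * fst (om 0)
                            + (a * fst (X N) - fst (Xhat N)) * fst (om N)) = 0))"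

end

theory Submission
  imports Defs "HOL-Library.Function_Algebras"
begin

lemma ds_eq: "N > 0 \<Longrightarrow> ds N Y f j = (f j - f (j-1)) / elen Y j"
  by (simp add: ds_def drho_def mesh_h_def)

lemma ip_pc_eq: assumes "N > 0" shows "ip_pc N Y u v = (\<Sum>j=1..N. u j * v j * elen Y j)"
  unfolding ip_pc_def
proof (rule sum.cong[OF refl])
  fix j
  have "(drho N (\<lambda>i. fst (Y i)) j)\<^sup>2 + (drho N (\<lambda>i. snd (Y i)) j)\<^sup>2
        = (real N)\<^sup>2 * ((edge1 Y j)\<^sup>2 + (edge2 Y j)\<^sup>2)"
    by (simp add: drho_def mesh_h_def edge1_def edge2_def power2_eq_square algebra_simps)
  hence "sqrt ((drho N (\<lambda>i. fst (Y i)) j)\<^sup>2 + (drho N (\<lambda>i. snd (Y i)) j)\<^sup>2) = real N * elen Y j"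
    by (simp add: real_sqrt_mult elen_def)
  thus "mesh_h N * (u j * v j) * sqrt ((drho N (\<lambda>i. fst (Y i)) j)\<^sup>2 + (drho N (\<lambda>i. snd (Y i)) j)\<^sup>2) = u j * v j * elen Y j"
    using assms by (simp add: mesh_h_def)
qed

definition E1 :: "nat \<Rightarrow> (nat \<Rightarrow> real \<times> real) \<Rightarrow> real \<Rightarrow> real \<Rightarrow> (nat \<Rightarrow> real \<times> real) \<Rightarrow> (nat \<Rightarrow> real \<times> real) \<Rightarrow> (nat \<Rightarrow> real) \<Rightarrow> (nat \<Rightarrow> real) \<Rightarrow> real" where
 "E1 N Y a tau Xhat X kappa psi = ip_lump N Y (\<lambda>j i. ((a * fst (X i) - fst (Xhat i)) / tau * nrm1 Y j + (a * snd (X i) - snd (Xhat i)) / tau * nrm2 Y j) * psi i) + ip_pc N Y (ds N Y kappa) (ds N Y psi)"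

definition E2 :: "nat \<Rightarrow> (nat \<Rightarrow> real \<times> real) \<Rightarrow> real \<Rightarrow> real \<Rightarrow> real \<Rightarrow> real \<Rightarrow> (nat \<Rightarrow> real \<times> real) \<Rightarrow> (nat \<Rightarrow> real \<times> real) \<Rightarrow> (nat \<Rightarrow> real) \<Rightarrow> (nat \<Rightarrow> real \<times> real) \<Rightarrow> real" where
 "E2 N Y a tau eta sigma Xhat X kappa om = ip_lump N Y (\<lambda>j i. kappa i * (nrm1 Y j * fst (om i) + nrm2 Y j * snd (om i)))
        - (ip_pc N Y (ds N Y (\<lambda>i. fst (X i))) (ds N Y (\<lambda>i. fst (om i)))
           + ip_pc N Y (ds N Y (\<lambda>i. snd (X i))) (ds N Y (\<lambda>i. snd (om i))))
        + sigma * (fst (om N) - fst (om 0))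
        - 1 / (eta * tau) * ((a * fst (X 0) - fst (Xhat 0)) * fst (om 0)
                            + (a * fst (X N) - fst (Xhat N)) * fst (om N))"

lemma eqs_iff: "bdf_zjb_eqs N k tau eta sigma Xs Y X kappa \<longleftrightarrow>
   (\<forall>psi\<in>Kh N. E1 N Y (bdf_a k) tau (bdf_hat k Xs) X kappa psi = 0) \<and>
   (\<forall>om\<in>Xh N. E2 N Y (bdf_a k) tau eta sigma (bdf_hat k Xs) X kappa om = 0)"
  by (simp add: bdf_zjb_eqs_def E1_def E2_def Let_def)

lemma lin_sum:
  assumes add: "\<And>f g. \<Phi> (\<lambda>j. f j + g j) = \<Phi> f + \<Phi> g"
    and hom: "\<And>c f. \<Phi> (\<lambda>j. c * f j) = c * \<Phi> f" and fin: "finite I"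
  shows "\<Phi> (\<lambda>j. \<Sum>i\<in>I. c i * g i j) = (\<Sum>i\<in>I. c i * (\<Phi> (g i) :: real))"
  using fin
proof (induction I rule: finite_induct)
  case empty
  have "\<Phi> (\<lambda>j. 0 * 0) = 0 * \<Phi> (\<lambda>j. 0)" by (rule hom)
  thus ?case by simp
next
  case (insert x F)
  have "\<Phi> (\<lambda>j. \<Sum>i\<in>insert x F. c i * g i j) = \<Phi> (\<lambda>j. c x * g x j + (\<Sum>i\<in>F. c i * g i j))"
    using insert by simp
  also have "\<dots> = c x * \<Phi> (g x) + (\<Sum>i\<in>F. c i * \<Phi> (g i))"
    using add hom insert by simp
  finally show ?case using insert by simp
qed

lemma E1_add: "E1 N Y a tau Xhat X kappa (\<lambda>j. f j + g j) = E1 N Y a tau Xhat X kappa f + E1 N Y a tau Xhat X kappa g"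
  by (simp add: E1_def ip_lump_def ip_pc_def ds_def drho_def sum.distrib[symmetric] algebra_simps add_divide_distrib diff_divide_distrib)

lemma E1_hom: "E1 N Y a tau Xhat X kappa (\<lambda>j. c * f j) = c * E1 N Y a tau Xhat X kappa f"
  by (simp add: E1_def ip_lump_def ip_pc_def ds_def drho_def sum_distrib_left algebra_simps)

lemma E2_add: "E2 N Y a tau eta sigma Xhat X kappa (\<lambda>j. (f j + f' j, g j + g' j)) = E2 N Y a tau eta sigma Xhat X kappa (\<lambda>j. (f j, g j)) + E2 N Y a tau eta sigma Xhat X kappa (\<lambda>j. (f' j, g' j))"
  by (simp add: E2_def ip_lump_def ip_pc_def ds_def drho_def sum.distrib[symmetric] algebra_simps add_divide_distrib diff_divide_distrib)

lemma E2_hom: "E2 N Y a tau eta sigma Xhat X kappa (\<lambda>j. (c * f j, c * g j)) = c * E2 N Y a tau eta sigma Xhat X kappa (\<lambda>j. (f j, g j))"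
  by (simp add: E2_def ip_lump_def ip_pc_def ds_def drho_def sum_distrib_left algebra_simps)

definition dl :: "nat \<Rightarrow> nat \<Rightarrow> real" where "dl i j = (if j = i then 1 else 0)"

lemma Kh_expand: assumes "psi \<in> Kh N" shows "(\<lambda>j. \<Sum>i\<in>{0..N}. psi i * dl i j) = psi"
proof
  fix j show "(\<Sum>i\<in>{0..N}. psi i * dl i j) = psi j"
    using assms by (cases "j \<le> N") (auto simp: dl_def Kh_def if_distrib cong: if_cong)
qed

lemma Kh0_expand: assumes "f \<in> Kh0 N" shows "(\<lambda>j. \<Sum>i\<in>{1..N-1}. f i * dl i j) = f"
proof
  fix j show "(\<Sum>i\<in>{1..N-1}. f i * dl i j) = f j"
  proof (cases "j \<ge> 1 \<and> j \<le> N - 1")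
    case True thus ?thesis by (simp add: dl_def if_distrib cong: if_cong)
  next
    case False
    hence "j = 0 \<or> j = N \<or> j > N" by auto
    moreover have "(\<Sum>i\<in>{1..N-1}. f i * dl i j) = 0"
      using False by (intro sum.neutral) (auto simp: dl_def)
    ultimately show ?thesis using assms by (auto simp: Kh0_def Kh_def)
  qed
qed

lemma E1_test: assumes "psi \<in> Kh N"
  shows "E1 N Y a tau Xhat X kappa psi = (\<Sum>i\<in>{0..N}. psi i * E1 N Y a tau Xhat X kappa (dl i))"
proof -
  have "E1 N Y a tau Xhat X kappa (\<lambda>j. \<Sum>i\<in>{0..N}. psi i * dl i j) = (\<Sum>i\<in>{0..N}. psi i * E1 N Y a tau Xhat X kappa (dl i))"
    by (rule lin_sum) (simp_all add: E1_add E1_hom)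
  thus ?thesis using Kh_expand[OF assms] by simp
qed

lemma E2_test: assumes "om \<in> Xh N"
  shows "E2 N Y a tau eta sigma Xhat X kappa om = (\<Sum>i\<in>{0..N}. fst (om i) * E2 N Y a tau eta sigma Xhat X kappa (\<lambda>j. (dl i j, 0)))
     + (\<Sum>i\<in>{1..N-1}. snd (om i) * E2 N Y a tau eta sigma Xhat X kappa (\<lambda>j. (0, dl i j)))"
proof -
  let ?E = "E2 N Y a tau eta sigma Xhat X kappa"
  define F where "F = (\<lambda>j. \<Sum>i\<in>{0..N}. fst (om i) * dl i j)"
  define G where "G = (\<lambda>j. \<Sum>i\<in>{1..N-1}. snd (om i) * dl i j)"
  have F: "F = (\<lambda>j. fst (om j))" unfolding F_def using Kh_expand[of "\<lambda>j. fst (om j)" N] assms by (simp add: Xh_def)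
  have G: "G = (\<lambda>j. snd (om j))" unfolding G_def using Kh0_expand[of "\<lambda>j. snd (om j)" N] assms by (simp add: Xh_def)
  have om: "om = (\<lambda>j. (F j + 0, 0 + G j))" using F G by (simp add: fun_eq_iff)
  have 1: "?E om = ?E (\<lambda>j. (F j, 0)) + ?E (\<lambda>j. (0, G j))"
    using om E2_add[of N Y a tau eta sigma Xhat X kappa F "\<lambda>j. 0" "\<lambda>j. 0" G] by simp
  have 2: "?E (\<lambda>j. (F j, 0)) = (\<Sum>i\<in>{0..N}. fst (om i) * ?E (\<lambda>j. (dl i j, 0)))"
    unfolding F_def
  proof (rule lin_sum[where \<Phi> = "\<lambda>f. ?E (\<lambda>j. (f j, 0))"])
    fix f g :: "nat \<Rightarrow> real"
    show "?E (\<lambda>j. (f j + g j, 0)) = ?E (\<lambda>j. (f j, 0)) + ?E (\<lambda>j. (g j, 0))"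
      using E2_add[of N Y a tau eta sigma Xhat X kappa f g "\<lambda>j. 0" "\<lambda>j. 0"] by simp
  next
    fix c and f :: "nat \<Rightarrow> real"
    show "?E (\<lambda>j. (c * f j, 0)) = c * ?E (\<lambda>j. (f j, 0))"
      using E2_hom[of N Y a tau eta sigma Xhat X kappa c f "\<lambda>j. 0"] by simp
  qed simp
  have 3: "?E (\<lambda>j. (0, G j)) = (\<Sum>i\<in>{1..N-1}. snd (om i) * ?E (\<lambda>j. (0, dl i j)))"
    unfolding G_def
  proof (rule lin_sum[where \<Phi> = "\<lambda>f. ?E (\<lambda>j. (0, f j))"])
    fix f g :: "nat \<Rightarrow> real"
    show "?E (\<lambda>j. (0, f j + g j)) = ?E (\<lambda>j. (0, f j)) + ?E (\<lambda>j. (0, g j))"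
      using E2_add[of N Y a tau eta sigma Xhat X kappa "\<lambda>j. 0" "\<lambda>j. 0" f g] by simp
  next
    fix c and f :: "nat \<Rightarrow> real"
    show "?E (\<lambda>j. (0, c * f j)) = c * ?E (\<lambda>j. (0, f j))"
      using E2_hom[of N Y a tau eta sigma Xhat X kappa c "\<lambda>j. 0" f] by simp
  qed simp
  show ?thesis using 1 2 3 by simp
qed

abbreviation Z2 :: "nat \<Rightarrow> real \<times> real" where "Z2 \<equiv> (\<lambda>i. (0, 0))"

lemma E1_affine: "E1 N Y a tau Xhat X kappa psi = E1 N Y a tau Z2 X kappa psi + E1 N Y a tau Xhat Z2 (\<lambda>i. 0) psi"
  by (simp add: E1_def ip_lump_def ip_pc_def ds_def drho_def sum.distrib[symmetric] algebra_simps add_divide_distrib diff_divide_distrib)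

lemma E2_affine: "E2 N Y a tau eta sigma Xhat X kappa om = E2 N Y a tau eta 0 Z2 X kappa om + E2 N Y a tau eta sigma Xhat Z2 (\<lambda>i. 0) om"
  by (simp add: E2_def ip_lump_def ip_pc_def ds_def drho_def sum.distrib[symmetric] algebra_simps add_divide_distrib diff_divide_distrib)

lemma E1_uadd: "E1 N Y a tau Z2 (\<lambda>i. (fst (X i) + fst (X' i), snd (X i) + snd (X' i))) (\<lambda>i. k i + k' i) psi
   = E1 N Y a tau Z2 X k psi + E1 N Y a tau Z2 X' k' psi"
  by (simp add: E1_def ip_lump_def ip_pc_def ds_def drho_def sum.distrib[symmetric] algebra_simps add_divide_distrib diff_divide_distrib)

lemma E1_uhom: "E1 N Y a tau Z2 (\<lambda>i. (c * fst (X i), c * snd (X i))) (\<lambda>i. c * k i) psi = c * E1 N Y a tau Z2 X k psi"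
  by (simp add: E1_def ip_lump_def ip_pc_def ds_def drho_def sum_distrib_left algebra_simps)

lemma E2_uadd: "E2 N Y a tau eta 0 Z2 (\<lambda>i. (fst (X i) + fst (X' i), snd (X i) + snd (X' i))) (\<lambda>i. k i + k' i) om
   = E2 N Y a tau eta 0 Z2 X k om + E2 N Y a tau eta 0 Z2 X' k' om"
  by (simp add: E2_def ip_lump_def ip_pc_def ds_def drho_def sum.distrib[symmetric] algebra_simps add_divide_distrib diff_divide_distrib)

lemma E2_uhom: "E2 N Y a tau eta 0 Z2 (\<lambda>i. (c * fst (X i), c * snd (X i))) (\<lambda>i. c * k i) om = c * E2 N Y a tau eta 0 Z2 X k om"
  by (simp add: E2_def ip_lump_def ip_pc_def ds_def drho_def sum_distrib_left algebra_simps)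

lemma const_chain0:
  fixes j N :: nat and f :: "nat \<Rightarrow> real"
  assumes "\<forall>j\<in>{1..N}. f j = (f (j - 1) :: real)"
  shows "j \<le> N \<Longrightarrow> f j = f 0"
proof (induction j)
  case (Suc j) thus ?case using assms by (metis One_nat_def Suc_leD atLeastAtMost_iff diff_Suc_1 le_add1 plus_1_eq_Suc)
qed simp

lemma const_chain:
  fixes N :: nat and f :: "nat \<Rightarrow> real"
  assumes "\<forall>j\<in>{1..N}. f j = (f (j - 1) :: real)"
  shows "\<forall>j\<le>N. f j = f 0"
  using const_chain0[OF assms] by blast

lemma sq_zero:
  assumes N: "N > 0" and L: "\<forall>j\<in>{1..N}. elen Y j > 0"
    and z: "(\<Sum>j=1..N. (ds N Y f j)\<^sup>2 * elen Y j) = 0"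
  shows "\<forall>j\<le>N. f j = f 0"
proof -
  have "\<forall>j\<in>{1..N}. (ds N Y f j)\<^sup>2 * elen Y j = 0"
    using z L by (subst (asm) sum_nonneg_eq_0_iff) (auto intro!: mult_nonneg_nonneg simp: less_imp_le)
  have "\<forall>j\<in>{1..N}. f j = f (j - 1)"
  proof
    fix j assume j: "j \<in> {1..N}"
    have Lj: "elen Y j > 0" using L j by blast
    have "(ds N Y f j)\<^sup>2 * elen Y j = 0" using \<open>\<forall>j\<in>{1..N}. (ds N Y f j)\<^sup>2 * elen Y j = 0\<close> j by blast
    hence "ds N Y f j = 0" using Lj by simp
    hence "(f j - f (j - 1)) / elen Y j = 0" using N by (simp add: ds_eq)
    thus "f j = f (j - 1)" using Lj by simp
  qed
  thus ?thesis by (rule const_chain)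
qed

lemma sq_nonneg: "\<forall>j\<in>{1..N}. elen Y j > 0 \<Longrightarrow> (\<Sum>j=1..N. (g j)\<^sup>2 * elen Y j) \<ge> (0::real)"
  by (auto intro!: sum_nonneg mult_nonneg_nonneg simp: less_imp_le)

lemma energy:
  assumes N: "N \<ge> 1" and a: "a > 0" and tau: "tau > 0" and eta: "eta > 0"
    and L: "\<forall>j\<in>{1..N}. elen Y j > 0"
    and nc: "(nrm1 Y 1)\<^sup>2 + (nrm1 Y N)\<^sup>2 > 0"
    and X: "X \<in> Xh N" and K: "kappa \<in> Kh N"
    and e1: "\<forall>psi\<in>Kh N. E1 N Y a tau Z2 X kappa psi = 0"
    and e2: "\<forall>om\<in>Xh N. E2 N Y a tau eta 0 Z2 X kappa om = 0"
  shows "X = Z2 \<and> kappa = (\<lambda>i. 0)"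
proof -
  have N0: "N > 0" using N by simp
  define M where "M = ip_lump N Y (\<lambda>j i. kappa i * (nrm1 Y j * fst (X i) + nrm2 Y j * snd (X i)))"
  define P where "P = (\<Sum>j=1..N. (ds N Y kappa j)\<^sup>2 * elen Y j)"
  define Q1 where "Q1 = (\<Sum>j=1..N. (ds N Y (\<lambda>i. fst (X i)) j)\<^sup>2 * elen Y j)"
  define Q2 where "Q2 = (\<Sum>j=1..N. (ds N Y (\<lambda>i. snd (X i)) j)\<^sup>2 * elen Y j)"
  define R where "R = 1 / (eta * tau) * (a * (fst (X 0))\<^sup>2 + a * (fst (X N))\<^sup>2)"
  have lump: "ip_lump N Y (\<lambda>j i. ((a * fst (X i) - 0) / tau * nrm1 Y j + (a * snd (X i) - 0) / tau * nrm2 Y j) * kappa i) = (a / tau) * M"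
    by (simp add: ip_lump_def M_def sum_distrib_left algebra_simps)
  have "E1 N Y a tau Z2 X kappa kappa = (a / tau) * M + P"
    unfolding E1_def P_def ip_pc_eq[OF N0] using lump by (simp add: power2_eq_square)
  hence eq1: "(a / tau) * M + P = 0" using e1 K by simp
  have "E2 N Y a tau eta 0 Z2 X kappa X = M - (Q1 + Q2) - R"
    unfolding E2_def M_def Q1_def Q2_def R_def ip_pc_eq[OF N0] by (simp add: power2_eq_square)
  hence eq2: "M - (Q1 + Q2) - R = 0" using e2 X by simp
  have P0: "P \<ge> 0" unfolding P_def by (rule sq_nonneg[OF L])
  have Q10: "Q1 \<ge> 0" unfolding Q1_def by (rule sq_nonneg[OF L])
  have Q20: "Q2 \<ge> 0" unfolding Q2_def by (rule sq_nonneg[OF L])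
  have R0: "R \<ge> 0" unfolding R_def using a eta tau by (auto intro!: mult_nonneg_nonneg add_nonneg_nonneg)
  have at: "a / tau > 0" using a tau by simp
  have M0: "M \<ge> 0" using eq2 Q10 Q20 R0 by linarith
  have "(a / tau) * M \<ge> 0" using at M0 by (intro mult_nonneg_nonneg) auto
  hence "P = 0" "(a/tau) * M = 0" using eq1 P0 by linarith+
  hence "M = 0" using a tau by simp
  hence Qz: "Q1 = 0" "Q2 = 0" "R = 0" using eq2 Q10 Q20 R0 by linarith+
  have ck: "\<forall>j\<le>N. kappa j = kappa 0" using sq_zero[OF N0 L] \<open>P = 0\<close> unfolding P_def by blast
  have cx: "\<forall>j\<le>N. fst (X j) = fst (X 0)" using sq_zero[OF N0 L, of "\<lambda>i. fst (X i)"] Qz(1) unfolding Q1_def by blast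
  have cy: "\<forall>j\<le>N. snd (X j) = snd (X 0)" using sq_zero[OF N0 L, of "\<lambda>i. snd (X i)"] Qz(2) unfolding Q2_def by blast
  have "a * (fst (X 0))\<^sup>2 + a * (fst (X N))\<^sup>2 = 0" using Qz(3) eta tau unfolding R_def by simp
  hence x0: "fst (X 0) = 0" using a
    by (smt (verit) mult_pos_pos zero_less_power2 mult_nonneg_nonneg zero_le_power2)
  have y0: "snd (X 0) = 0" using X by (simp add: Xh_def Kh0_def)
  have XZ: "X = Z2"
  proof
    fix j show "X j = Z2 j"
    proof (cases "j \<le> N")
      case True thus ?thesis using cx cy x0 y0 by (metis prod.collapse)
    next
      case False thus ?thesis using X by (simp add: Xh_def Kh0_def Kh_def prod_eq_iff)
    qed
  qed
  have t0: "(\<lambda>j. (dl 0 j, 0::real)) \<in> Xh N" by (simp add: Xh_def Kh_def Kh0_def dl_def)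
  have tN: "(\<lambda>j. (dl N j, 0::real)) \<in> Xh N" by (simp add: Xh_def Kh_def Kh0_def dl_def)
  have s0: "E2 N Y a tau eta 0 Z2 X kappa (\<lambda>j. (dl 0 j, 0)) = 1/2 * (elen Y 1 * (kappa 0 * nrm1 Y 1))"
  proof -
    have "E2 N Y a tau eta 0 Z2 X kappa (\<lambda>j. (dl 0 j, 0)) = ip_lump N Y (\<lambda>j i. kappa i * (nrm1 Y j * dl 0 i))"
      unfolding E2_def XZ by (simp add: ds_eq[OF N0] ip_pc_eq[OF N0])
    also have "\<dots> = 1/2 * (\<Sum>j\<in>{1..N}. (if j = 1 then elen Y 1 * (kappa 0 * nrm1 Y 1) else 0))"
      unfolding ip_lump_def by (intro arg_cong[where f = "\<lambda>x. 1/2 * x"] sum.cong) (auto simp: dl_def)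
    also have "\<dots> = 1/2 * (elen Y 1 * (kappa 0 * nrm1 Y 1))" using N by simp
    finally show ?thesis .
  qed
  have sN: "E2 N Y a tau eta 0 Z2 X kappa (\<lambda>j. (dl N j, 0)) = 1/2 * (elen Y N * (kappa N * nrm1 Y N))"
  proof -
    have "E2 N Y a tau eta 0 Z2 X kappa (\<lambda>j. (dl N j, 0)) = ip_lump N Y (\<lambda>j i. kappa i * (nrm1 Y j * dl N i))"
      unfolding E2_def XZ by (simp add: ds_eq[OF N0] ip_pc_eq[OF N0])
    also have "\<dots> = 1/2 * (\<Sum>j\<in>{1..N}. (if j = N then elen Y N * (kappa N * nrm1 Y N) else 0))"
      unfolding ip_lump_def by (intro arg_cong[where f = "\<lambda>x. 1/2 * x"] sum.cong) (auto simp: dl_def)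
    also have "\<dots> = 1/2 * (elen Y N * (kappa N * nrm1 Y N))" using N by simp
    finally show ?thesis .
  qed
  have L1: "elen Y 1 > 0" "elen Y N > 0" using L N by auto
  have k1: "kappa 0 * nrm1 Y 1 = 0" using s0 e2 t0 L1 by simp
  have kN: "kappa N = kappa 0" using ck by blast
  have k2: "kappa 0 * nrm1 Y N = 0" using sN e2 tN L1 kN by simp
  have "kappa 0 = 0"
  proof (rule ccontr)
    assume "kappa 0 \<noteq> 0"
    hence "nrm1 Y 1 = 0" "nrm1 Y N = 0" using k1 k2 by simp_all
    thus False using nc by simp
  qed
  have KZ: "kappa = (\<lambda>i. 0)"
  proof
    fix j show "kappa j = 0"
      proof (cases "j \<le> N")
      case True thus ?thesis using ck \<open>kappa 0 = 0\<close> by metis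
    next
      case False thus ?thesis using K by (simp add: Kh_def)
    qed
  qed
  show ?thesis using XZ KZ by simp
qed

context vector_space begin
lemma inj_imp_surj_span:
  assumes W: "finite W" and lf: "Vector_Spaces.linear scale scale f"
    and sub: "f ` span W \<subseteq> span W" and inj: "inj_on f (span W)"
  shows "span W \<subseteq> f ` span W"
proof
  fix y assume y: "y \<in> span W"
  obtain B where B: "B \<subseteq> span W" "independent B" "span W \<subseteq> span B" "card B = dim (span W)"
    by (rule basis_exists)
  have finB: "finite B" using independent_span_bound[OF W B(2) B(1)] by simp
  have spB: "span B = span W"
    by (rule subset_antisym[OF span_minimal[OF B(1) subspace_span] B(3)])
  interpret lf: Vector_Spaces.linear scale scale f by (rule lf)
  have indf: "independent (f ` B)"
    using lf.independent_injective_image[OF B(2)] inj spB by simp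
  have img: "f ` span W = span (f ` B)" using lf.span_image[of B] spB by simp
  show "y \<in> f ` span W"
  proof (rule ccontr)
    assume ny: "y \<notin> f ` span W"
    hence ny': "y \<notin> span (f ` B)" using img by simp
    have ind2: "independent (insert y (f ` B))" by (rule independent_insertI[OF ny' indf])
    have "f ` B \<subseteq> f ` span W" using B(1) by (rule image_mono)
    hence "f ` B \<subseteq> span W" using sub by (rule order_trans)
    hence sub2: "insert y (f ` B) \<subseteq> span B" using y spB by simp
    have c1: "card (insert y (f ` B)) \<le> card B"
      using independent_span_bound[OF finB ind2 sub2] by simp
    have "f ` B \<subseteq> span (f ` B)" by (rule span_superset)
    hence "y \<notin> f ` B" using ny' by blast
    moreover have "card (f ` B) = card B"
      by (rule card_image, rule inj_on_subset[OF inj B(1)])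
    ultimately have "card (insert y (f ` B)) = card B + 1" using finB by simp
    with c1 show False by simp
  qed
qed
end

definition sc :: "real \<Rightarrow> (nat \<Rightarrow> real) \<Rightarrow> (nat \<Rightarrow> real)" where
  "sc c u = (\<lambda>i. c * u i)"

lemma vs_sc: "vector_space sc"
  apply unfold_locales
  apply (simp_all add: sc_def fun_eq_iff distrib_left distrib_right)
  done

lemma ms_sc: "module sc" using vs_sc by (simp add: module_iff_vector_space)

definition enc :: "(nat \<Rightarrow> real \<times> real) \<Rightarrow> (nat \<Rightarrow> real) \<Rightarrow> nat \<Rightarrow> real" where
  "enc X kappa = (\<lambda>j. if j mod 3 = 0 then fst (X (j div 3)) else if j mod 3 = 1 then snd (X (j div 3)) else kappa (j div 3))"
definition decX :: "(nat \<Rightarrow> real) \<Rightarrow> nat \<Rightarrow> real \<times> real" where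
  "decX u = (\<lambda>i. (u (3*i), u (3*i+1)))"
definition decK :: "(nat \<Rightarrow> real) \<Rightarrow> nat \<Rightarrow> real" where
  "decK u = (\<lambda>i. u (3*i+2))"
definition JJ :: "nat \<Rightarrow> nat set" where
  "JJ N = {j. j < 3*N+3 \<and> j \<noteq> 1 \<and> j \<noteq> 3*N+1}"
definition SS :: "nat \<Rightarrow> (nat \<Rightarrow> real) set" where
  "SS N = {u. \<forall>j. j \<notin> JJ N \<longrightarrow> u j = 0}"

lemma divmod3 [simp]: "Suc (3*i) div 3 = i" "Suc (3*i) mod 3 = 1" "Suc (Suc (3*i)) div 3 = i" "Suc (Suc (3*i)) mod 3 = 2"
  by presburger+

lemma dec_SS: assumes "u \<in> SS N" shows "decX u \<in> Xh N" "decK u \<in> Kh N"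
  using assms by (auto simp: SS_def JJ_def decX_def decK_def Xh_def Kh_def Kh0_def)

lemma enc_SS: assumes "X \<in> Xh N" "kappa \<in> Kh N" shows "enc X kappa \<in> SS N"
proof -
  { fix j assume j: "j \<notin> JJ N"
    have "enc X kappa j = 0"
    proof (cases "j < 3*N+3")
      case True
      hence "j = 1 \<or> j = 3*N+1" using j by (auto simp: JJ_def)
      thus ?thesis using assms by (auto simp: enc_def Xh_def Kh0_def)
    next
      case False
      hence "j div 3 > N" by auto
      thus ?thesis using assms by (auto simp: enc_def Xh_def Kh0_def Kh_def)
    qed }
  thus ?thesis by (auto simp: SS_def)
qed

lemma dec_enc: "decX (enc X kappa) = X" "decK (enc X kappa) = kappa"
  by (simp_all add: decX_def decK_def enc_def fun_eq_iff)

lemma enc_dec: "enc (decX u) (decK u) = u"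
proof
  fix j :: nat
  have "j mod 3 = 0 \<or> j mod 3 = 1 \<or> j mod 3 = 2" by auto
  moreover
  { assume "j mod 3 = 0" hence "3 * (j div 3) = j" by presburger
    hence "enc (decX u) (decK u) j = u j" using \<open>j mod 3 = 0\<close> by (simp add: enc_def decX_def) }
  moreover
  { assume "j mod 3 = 1" hence "Suc (3 * (j div 3)) = j" by presburger
    hence "enc (decX u) (decK u) j = u j" using \<open>j mod 3 = 1\<close> by (simp add: enc_def decX_def) }
  moreover
  { assume "j mod 3 = 2" hence "Suc (Suc (3 * (j div 3))) = j" by presburger
    hence "enc (decX u) (decK u) j = u j" using \<open>j mod 3 = 2\<close> by (simp add: enc_def decK_def) }
  ultimately show "enc (decX u) (decK u) j = u j" by metis
qed

lemma sum_fun_apply: "(\<Sum>i\<in>A. f i) (x::nat) = (\<Sum>i\<in>A. (f i x :: real))"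
  by (induction A rule: infinite_finite_induct) auto

lemma finite_JJ: "finite (JJ N)" unfolding JJ_def by auto

lemma span_SS: "module.span sc ((\<lambda>j. dl j) ` JJ N) = SS N"
proof
  show "module.span sc ((\<lambda>j. dl j) ` JJ N) \<subseteq> SS N"
  proof (rule module.span_minimal[OF ms_sc])
    show "(\<lambda>j. dl j) ` JJ N \<subseteq> SS N" by (auto simp: SS_def dl_def)
    show "module.subspace sc (SS N)" by (auto simp: module.subspace_def[OF ms_sc] SS_def sc_def)
  qed
  show "SS N \<subseteq> module.span sc ((\<lambda>j. dl j) ` JJ N)"
  proof
    fix u assume u: "u \<in> SS N"
    have "u = (\<Sum>j\<in>JJ N. sc (u j) (dl j))"
    proof
      fix l show "u l = (\<Sum>j\<in>JJ N. sc (u j) (dl j)) l"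
      proof -
        have "(\<Sum>j\<in>JJ N. sc (u j) (dl j)) l = (\<Sum>j\<in>JJ N. u j * dl j l)"
          by (simp add: sum_fun_apply sc_def)
        also have "\<dots> = (\<Sum>j\<in>JJ N. if l = j then u j else 0)"
          by (rule sum.cong) (auto simp: dl_def)
        also have "\<dots> = (if l \<in> JJ N then u l else 0)"
          using finite_JJ[of N] by (simp add: sum.delta)
        also have "\<dots> = u l" using u by (auto simp: SS_def)
        finally show ?thesis by simp
      qed
    qed
    also have "\<dots> \<in> module.span sc ((\<lambda>j. dl j) ` JJ N)"
      by (intro module.span_sum[OF ms_sc] module.span_scale[OF ms_sc] module.span_base[OF ms_sc]) auto
    finally show "u \<in> module.span sc ((\<lambda>j. dl j) ` JJ N)" .
  qed
qed

lemma divmod3b [simp]: "(3*i) div 3 = (i::nat)" "(3*i) mod 3 = (0::nat)"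
  by presburger+

definition TT :: "nat \<Rightarrow> (nat \<Rightarrow> real \<times> real) \<Rightarrow> real \<Rightarrow> real \<Rightarrow> real \<Rightarrow> real \<Rightarrow> (nat \<Rightarrow> real \<times> real) \<Rightarrow> (nat \<Rightarrow> real \<times> real) \<Rightarrow> (nat \<Rightarrow> real) \<Rightarrow> nat \<Rightarrow> real" where
  "TT N Y a tau eta sigma Xhat X kappa = (\<lambda>j. if j \<in> JJ N then
      (if j mod 3 = 0 then E2 N Y a tau eta sigma Xhat X kappa (\<lambda>l. (dl (j div 3) l, 0))
       else if j mod 3 = 1 then E2 N Y a tau eta sigma Xhat X kappa (\<lambda>l. (0, dl (j div 3) l))
       else E1 N Y a tau Xhat X kappa (dl (j div 3))) else 0)"

lemma TT_char:
  assumes N: "N \<ge> 1"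
  shows "(\<forall>j. TT N Y a tau eta sigma Xhat X kappa j = 0) \<longleftrightarrow>
     (\<forall>psi\<in>Kh N. E1 N Y a tau Xhat X kappa psi = 0) \<and> (\<forall>om\<in>Xh N. E2 N Y a tau eta sigma Xhat X kappa om = 0)"
proof
  assume T: "\<forall>j. TT N Y a tau eta sigma Xhat X kappa j = 0"
  have t2: "E1 N Y a tau Xhat X kappa (dl i) = 0" if "i \<le> N" for i
  proof -
    have "Suc (Suc (3*i)) \<in> JJ N" unfolding JJ_def mem_Collect_eq using that by presburger
    thus ?thesis using T[rule_format, of "Suc (Suc (3*i))"] by (simp add: TT_def)
  qed
  have t0: "E2 N Y a tau eta sigma Xhat X kappa (\<lambda>l. (dl i l, 0)) = 0" if "i \<le> N" for i
  proof -
    have "3*i \<in> JJ N" using that by (auto simp: JJ_def)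
    thus ?thesis using T[rule_format, of "3*i"] by (simp add: TT_def)
  qed
  have t1: "E2 N Y a tau eta sigma Xhat X kappa (\<lambda>l. (0, dl i l)) = 0" if "i \<in> {1..N-1}" for i
  proof -
    have "Suc (3*i) \<in> JJ N" using that by (auto simp: JJ_def)
    thus ?thesis using T[rule_format, of "Suc (3*i)"] by (simp add: TT_def)
  qed
  show "(\<forall>psi\<in>Kh N. E1 N Y a tau Xhat X kappa psi = 0) \<and> (\<forall>om\<in>Xh N. E2 N Y a tau eta sigma Xhat X kappa om = 0)"
  proof (intro conjI ballI)
    fix psi assume "psi \<in> Kh N"
    thus "E1 N Y a tau Xhat X kappa psi = 0" using t2 by (simp add: E1_test)
  next
    fix om assume "om \<in> Xh N"
    thus "E2 N Y a tau eta sigma Xhat X kappa om = 0" using t0 t1 by (simp add: E2_test)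
  qed
next
  assume H: "(\<forall>psi\<in>Kh N. E1 N Y a tau Xhat X kappa psi = 0) \<and> (\<forall>om\<in>Xh N. E2 N Y a tau eta sigma Xhat X kappa om = 0)"
  show "\<forall>j. TT N Y a tau eta sigma Xhat X kappa j = 0"
  proof
    fix j
    show "TT N Y a tau eta sigma Xhat X kappa j = 0"
    proof (cases "j \<in> JJ N")
      case False thus ?thesis by (simp add: TT_def)
    next
      case True
      define i where "i = j div 3"
      have iN: "i \<le> N" using True by (auto simp: JJ_def i_def)
      have A: "(\<lambda>l. (dl i l, 0::real)) \<in> Xh N" using iN by (simp add: Xh_def Kh_def Kh0_def dl_def)
      have C: "dl i \<in> Kh N" using iN by (simp add: Kh_def dl_def)
      show ?thesis
      proof (cases "j mod 3 = 1")
        case True': True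
        have "j = Suc (3 * i)" using True' unfolding i_def by presburger
        moreover have "j \<noteq> 1" "j \<noteq> 3*N+1" using True by (auto simp: JJ_def)
        ultimately have "i \<noteq> 0" "i \<noteq> N" by auto
        hence B: "(\<lambda>l. (0::real, dl i l)) \<in> Xh N" using iN by (simp add: Xh_def Kh_def Kh0_def dl_def)
        show ?thesis using True True' B H by (simp add: TT_def i_def)
      next
        case False
        thus ?thesis using True A C H by (simp add: TT_def i_def)
      qed
    qed
  qed
qed

lemma TT_affine: "TT N Y a tau eta sigma Xhat X kappa j = TT N Y a tau eta 0 Z2 X kappa j + TT N Y a tau eta sigma Xhat Z2 (\<lambda>i. 0) j"
  unfolding TT_def using E1_affine[of N Y a tau Xhat X kappa] E2_affine[of N Y a tau eta sigma Xhat X kappa] by simp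

lemma TT_uadd: "TT N Y a tau eta 0 Z2 (\<lambda>i. (fst (X i) + fst (X' i), snd (X i) + snd (X' i))) (\<lambda>i. k i + k' i) j
   = TT N Y a tau eta 0 Z2 X k j + TT N Y a tau eta 0 Z2 X' k' j"
  unfolding TT_def by (simp add: E1_uadd E2_uadd)

lemma TT_uhom: "TT N Y a tau eta 0 Z2 (\<lambda>i. (c * fst (X i), c * snd (X i))) (\<lambda>i. c * k i) j = c * TT N Y a tau eta 0 Z2 X k j"
  unfolding TT_def by (simp add: E1_uhom E2_uhom)

definition FF :: "nat \<Rightarrow> (nat \<Rightarrow> real \<times> real) \<Rightarrow> real \<Rightarrow> real \<Rightarrow> real \<Rightarrow> (nat \<Rightarrow> real) \<Rightarrow> nat \<Rightarrow> real" where
  "FF N Y a tau eta u = TT N Y a tau eta 0 Z2 (decX u) (decK u)"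

lemma FF_add: "FF N Y a tau eta (u + v) = FF N Y a tau eta u + FF N Y a tau eta v"
proof -
  have e1: "decX (u + v) = (\<lambda>i. (fst (decX u i) + fst (decX v i), snd (decX u i) + snd (decX v i)))"
    and e2: "decK (u + v) = (\<lambda>i. decK u i + decK v i)" by (simp_all add: decX_def decK_def)
  show ?thesis unfolding FF_def e1 e2 by (simp add: fun_eq_iff TT_uadd)
qed

lemma FF_hom: "FF N Y a tau eta (sc c u) = sc c (FF N Y a tau eta u)"
proof -
  have e1: "decX (sc c u) = (\<lambda>i. (c * fst (decX u i), c * snd (decX u i)))"
    and e2: "decK (sc c u) = (\<lambda>i. c * decK u i)" by (simp_all add: decX_def decK_def sc_def)
  show ?thesis unfolding FF_def e1 e2 by (simp add: fun_eq_iff TT_uhom sc_def)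
qed

lemma FF_linear: "Vector_Spaces.linear sc sc (FF N Y a tau eta)"
  unfolding Vector_Spaces.linear_iff using vs_sc FF_add FF_hom by blast

lemma TT_SS: "TT N Y a tau eta sigma Xhat X kappa \<in> SS N"
  by (simp add: SS_def TT_def)

theorem theorem3p2:
  fixes N k :: nat and tau eta sigma :: real
    and Xs :: "nat \<Rightarrow> nat \<Rightarrow> real \<times> real"
    and Xt :: "nat \<Rightarrow> real \<times> real"
  assumes "N \<ge> 3" and "tau > 0" and "eta > 0" and "k \<in> {2, 3, 4}"
    and "\<forall>p<k. Xs p \<in> Xh N"
    and "Xt \<in> Xh N"
    and "(nrm1 Xt 1)\<^sup>2 + (nrm1 Xt N)\<^sup>2 > 0"
    and "Min ((\<lambda>j. elen Xt j) ` {1..N}) > 0"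
  shows "\<exists>!(X, kappa). X \<in> Xh N \<and> kappa \<in> Kh N \<and>
           bdf_zjb_eqs N k tau eta sigma Xs Xt X kappa"
proof -
  note tau = assms(2) and eta = assms(3) and nc = assms(7)
  have N1: "N \<ge> 1" using assms(1) by simp
  define a where "a = bdf_a k"
  define Xhat where "Xhat = bdf_hat k Xs"
  have a: "a > 0" unfolding a_def bdf_a_def by simp
  have L: "\<forall>j\<in>{1..N}. elen Xt j > 0"
    using assms(8) N1 by (subst (asm) Min_gr_iff) auto
  define F where "F = FF N Xt a tau eta"
  define c where "c = TT N Xt a tau eta sigma Xhat Z2 (\<lambda>i. 0)"
  define W where "W = (\<lambda>j. dl j) ` JJ N"
  have spW: "module.span sc W = SS N" unfolding W_def by (rule span_SS)
  have finW: "finite W" unfolding W_def using finite_JJ by simp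
  have lin: "Vector_Spaces.linear sc sc F" unfolding F_def by (rule FF_linear)
  have FS: "F u \<in> SS N" for u unfolding F_def FF_def by (rule TT_SS)
  have ker: "u = 0" if u: "u \<in> SS N" and Fu: "F u = 0" for u
  proof -
    have "\<forall>j. TT N Xt a tau eta 0 Z2 (decX u) (decK u) j = 0"
      using Fu unfolding F_def FF_def by (simp add: fun_eq_iff)
    hence "(\<forall>psi\<in>Kh N. E1 N Xt a tau Z2 (decX u) (decK u) psi = 0) \<and> (\<forall>om\<in>Xh N. E2 N Xt a tau eta 0 Z2 (decX u) (decK u) om = 0)"
      using TT_char[OF N1] by blast
    hence "decX u = Z2 \<and> decK u = (\<lambda>i. 0)"
      using energy[OF N1 a tau eta L nc dec_SS[OF u]] by blast
    hence "enc (decX u) (decK u) = enc Z2 (\<lambda>i. 0)" by simp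
    thus "u = 0" unfolding enc_dec by (simp add: enc_def fun_eq_iff)
  qed
  have inj: "inj_on F (SS N)"
  proof (rule inj_onI)
    fix u v assume u: "u \<in> SS N" and v: "v \<in> SS N" and e: "F u = F v"
    have "F (u + sc (-1) v) = F u + sc (-1) (F v)"
      using FF_add FF_hom unfolding F_def by simp
    also have "\<dots> = 0" using e by (simp add: sc_def fun_eq_iff)
    finally have "F (u + sc (-1) v) = 0" .
    moreover have "u + sc (-1) v \<in> SS N" using u v by (simp add: SS_def sc_def)
    ultimately have "u + sc (-1) v = 0" using ker by blast
    thus "u = v" by (simp add: sc_def fun_eq_iff)
  qed
  have surj: "SS N \<subseteq> F ` SS N"
    using vector_space.inj_imp_surj_span[OF vs_sc finW lin] FS inj spW by auto
  have sol_iff: "(X \<in> Xh N \<and> kappa \<in> Kh N \<and> bdf_zjb_eqs N k tau eta sigma Xs Xt X kappa) \<longleftrightarrow>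
      (X \<in> Xh N \<and> kappa \<in> Kh N \<and> F (enc X kappa) = (\<lambda>j. - c j))" for X kappa
  proof -
    have "bdf_zjb_eqs N k tau eta sigma Xs Xt X kappa \<longleftrightarrow> (\<forall>j. TT N Xt a tau eta sigma Xhat X kappa j = 0)"
      unfolding eqs_iff TT_char[OF N1] a_def Xhat_def ..
    also have "\<dots> \<longleftrightarrow> F (enc X kappa) = (\<lambda>j. - c j)"
      unfolding F_def FF_def dec_enc c_def fun_eq_iff
      using TT_affine[of N Xt a tau eta sigma Xhat X kappa] by (metis add_eq_0_iff2 neg_equal_iff_equal add.commute)
    finally show ?thesis by simp
  qed
  have cS: "(\<lambda>j. - c j) \<in> SS N" using TT_SS[of N Xt a tau eta sigma Xhat Z2 "\<lambda>i. 0"] unfolding c_def by (simp add: SS_def)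
  have "(\<lambda>j. - c j) \<in> F ` SS N" by (rule subsetD[OF surj cS])
  then obtain u where u: "u \<in> SS N" and Fu: "F u = (\<lambda>j. - c j)" by (metis imageE)
  have Fu': "F (enc (decX u) (decK u)) = (\<lambda>j. - c j)" unfolding enc_dec by (rule Fu)
  have ex: "decX u \<in> Xh N \<and> decK u \<in> Kh N \<and> bdf_zjb_eqs N k tau eta sigma Xs Xt (decX u) (decK u)"
    using sol_iff[of "decX u" "decK u"] dec_SS[OF u] Fu' by blast
  have uniq: "X = decX u \<and> kappa = decK u"
    if "X \<in> Xh N \<and> kappa \<in> Kh N \<and> bdf_zjb_eqs N k tau eta sigma Xs Xt X kappa" for X kappa
  proof -
    have h: "X \<in> Xh N" "kappa \<in> Kh N" "F (enc X kappa) = (\<lambda>j. - c j)" using that sol_iff by blast+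
    have "enc X kappa = u" using inj enc_SS[OF h(1,2)] u h(3) Fu by (metis inj_onD)
    thus ?thesis using dec_enc by metis
  qed
  show ?thesis
  proof (rule ex1I[of _ "(decX u, decK u)"])
    show "case (decX u, decK u) of (X, kappa) \<Rightarrow> X \<in> Xh N \<and> kappa \<in> Kh N \<and> bdf_zjb_eqs N k tau eta sigma Xs Xt X kappa"
      using ex by (simp only: prod.case)
  next
    fix p assume p: "case p of (X, kappa) \<Rightarrow> X \<in> Xh N \<and> kappa \<in> Kh N \<and> bdf_zjb_eqs N k tau eta sigma Xs Xt X kappa"
    obtain X kappa where pe: "p = (X, kappa)" by (cases p)
    have "X \<in> Xh N \<and> kappa \<in> Kh N \<and> bdf_zjb_eqs N k tau eta sigma Xs Xt X kappa"
      using p unfolding pe by (simp only: prod.case)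
    hence "X = decX u \<and> kappa = decK u" by (rule uniq)
    thus "p = (decX u, decK u)" unfolding pe by simp
  qed
qed

end
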